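(* Fix $t,x$. Let $H(t,x,\cdot):\mathbb{R}^N\to\mathbb{R}$ be real-valued and convex, let $U(t)$ be a nonempty subset of $\mathbb{R}^M$, let $f(t,x,\cdot):\mathbb{R}^M\to\mathbb{R}^N$ be such that $f(t,x,U(t))$ is closed and convex, and let $l(t,x,\cdot):\mathbb{R}^M\to\mathbb{R}$. If $H(t,x,p)=\sup_{u\in U(t)}\{\langle p,f(t,x,u)\rangle-l(t,x,u)\}$ for all $p\in\mathbb{R}^N$, then $$\mathrm{dom}\,H^*(t,x,\cdot)=f(t,x,U(t)).$$
   Context: $H^*(t,x,v)=\sup_{p\in\mathbb{R}^N}\{\langle v,p\rangle-H(t,x,p)\}\in\mathbb{R}\cup\{+\infty\}$ is the Legendre–Fenchel conjugate in the last variable, and $\mathrm{dom}\,H^*(t,x,\cdot)=\{v\in\mathbb{R}^N:H^*(t,x,v)<+\infty\}$. *)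

theory Defs
  imports "HOL-Analysis.Analysis"
begin

definition legendre_conj :: "('a::real_inner \<Rightarrow> real) \<Rightarrow> 'a \<Rightarrow> ereal" where
  "legendre_conj h v = (SUP p. ereal (inner v p - h p))"

definition conj_dom :: "('a::real_inner \<Rightarrow> real) \<Rightarrow> 'a set" where
  "conj_dom h = {v. legendre_conj h v < \<infinity>}"

end

theory Submission
  imports Defs
begin

theorem lemma3p2:
  fixes H :: "real \<Rightarrow> real^'n \<Rightarrow> real^'n \<Rightarrow> real"
    and U :: "real \<Rightarrow> (real^'m) set"
    and f :: "real \<Rightarrow> real^'n \<Rightarrow> real^'m \<Rightarrow> real^'n"
    and l :: "real \<Rightarrow> real^'n \<Rightarrow> real^'m \<Rightarrow> real"
    and t :: real and x :: "real^'n"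
  assumes "convex_on UNIV (H t x)"
    and "U t \<noteq> {}"
    and "closed (f t x ` U t)"
    and "convex (f t x ` U t)"
    and "\<And>p. ereal (H t x p) = (SUP u\<in>U t. ereal (inner p (f t x u) - l t x u))"
  shows "conj_dom (H t x) = f t x ` U t"
proof -
  define h where "h = H t x"
  define K where "K = f t x ` U t"
  have upper: "inner p (f t x u) - l t x u \<le> h p" if "u \<in> U t" for p u
  proof -
    have "ereal (inner p (f t x u) - l t x u) \<le> (SUP u\<in>U t. ereal (inner p (f t x u) - l t x u))"
      using that by (rule SUP_upper)
    also have "\<dots> = ereal (h p)" using assms(5) h_def by simp
    finally show ?thesis by simp
  qed
  have least: "h p \<le> c" if "\<And>u. u \<in> U t \<Longrightarrow> inner p (f t x u) - l t x u \<le> c" for p c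
  proof -
    have "ereal (h p) = (SUP u\<in>U t. ereal (inner p (f t x u) - l t x u))" using assms(5) h_def by simp
    also have "\<dots> \<le> ereal c" by (rule SUP_least) (use that in simp)
    finally show ?thesis by simp
  qed
  have le: "ereal (inner v p - h p) \<le> legendre_conj h v" for v p
    unfolding legendre_conj_def by (rule SUP_upper) simp
  show ?thesis
    unfolding h_def[symmetric] K_def[symmetric]
  proof
    show "K \<subseteq> conj_dom h"
    proof
      fix v assume "v \<in> K"
      then obtain u where u: "u \<in> U t" "v = f t x u" unfolding K_def by auto
      have "legendre_conj h v \<le> ereal (l t x u)"
        unfolding legendre_conj_def
      proof (rule SUP_least)
        fix p
        have "inner p (f t x u) - l t x u \<le> h p" using upper u(1) .
        then show "ereal (inner v p - h p) \<le> ereal (l t x u)"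
          using u(2) by (simp add: inner_commute)
      qed
      then show "v \<in> conj_dom h" unfolding conj_dom_def
        using le_less_trans by fastforce
    qed
  next
    show "conj_dom h \<subseteq> K"
    proof
      fix v assume v: "v \<in> conj_dom h"
      show "v \<in> K"
      proof (rule ccontr)
        assume "v \<notin> K"
        then obtain a b where ab: "inner a v < b" "\<forall>k\<in>K. inner a k > b"
          using separating_hyperplane_closed_point[of K v] assms(3,4) K_def by blast
        define L where "L = legendre_conj h v"
        have "L < \<infinity>" using v unfolding conj_dom_def L_def by simp
        moreover have "L \<ge> ereal (inner v 0 - h 0)" using le[of v 0] L_def by simp
        ultimately obtain c where c: "L = ereal c" by (cases L) auto
        define d where "d = b - inner a v"
        have d: "d > 0" using ab d_def by simp
        define s where "s = (\<bar>c\<bar> + \<bar>h 0\<bar> + 1) / d"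
        have sd: "s * d = \<bar>c\<bar> + \<bar>h 0\<bar> + 1" using d s_def by simp
        have s0: "s \<ge> 0" using d s_def by simp
        define p where "p = - (s *\<^sub>R a)"
        have "h p \<le> - s * b + h 0"
        proof (rule least)
          fix u assume u: "u \<in> U t"
          have "inner a (f t x u) > b" using ab(2) u K_def by auto
          hence "s * inner a (f t x u) \<ge> s * b" using s0 by (simp add: mult_left_mono)
          moreover have "0 - l t x u \<le> h 0" using upper[OF u, of 0] by simp
          ultimately show "inner p (f t x u) - l t x u \<le> - s * b + h 0"
            unfolding p_def by simp
        qed
        moreover have "ereal (inner v p - h p) \<le> ereal c" using le c L_def by metis
        ultimately have "inner v p + s * b - h 0 \<le> c" by simp
        moreover have "inner v p = - s * inner a v" unfolding p_def by (simp add: inner_commute)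
        ultimately have "s * d - h 0 \<le> c" unfolding d_def by (simp add: algebra_simps)
        then show False using sd by linarith
      qed
    qed
  qed
qed

end
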